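(* Let $\mathfrak A$ be an associative $\mathcal A$-algebra with finite basis $B$ compatible with $1$ satisfying $P_1,P_2,P_3$, and let $\Phi:\mathfrak A\to\mathcal A\otimes_{\mathbb Z}\mathfrak A^\infty$ be as below (an $\mathcal A$-algebra homomorphism preserving $1$). Let $K$ be a field and $\mathcal A\to K$ a unital ring homomorphism; let $\Phi_K:\mathfrak A_K=K\otimes_{\mathcal A}\mathfrak A\to\mathfrak A^\infty_K=K\otimes_{\mathbb Z}\mathfrak A^\infty$ be the induced $K$-algebra homomorphism. If $\mathfrak A_K$ is a semisimple algebra, then $\Phi_K$ is an algebra isomorphism.
   Context: $\mathcal A=\mathbb Z[v,v^{-1}]$. $B$ compatible with $1$: $1=\sum_\mu1_\mu$ with distinct $1_\mu\in B$, orthogonal idempotents, and each $b\in B$ equal to $1_\mu b1_{\mu'}$ for some $\mu,\mu'$. Structure constants $r^{b''}_{b,b'}$ by $bb'=\sum r^{b''}_{b,b'}b''$. $b'\preceq b$ iff $b'$ lies in every $K\subset B$ containing $b$ whose $\mathcal A$-span is a two-sided ideal; two-sided cells: classes of $b\sim b'\iff b\preceq b'\preceq b$. $a(b)$: least $m\ge0$ with $v^{-m}r^{b''}_{b,b'}\in\mathbb Z[v^{-1}]$ for all $b',b''$ in the cell of $b$. $P_1$: $a$ constant on cells. $\mathfrak A^\infty$: ring with $\mathbb Z$-basis $t_b$, $t_bt_{b'}=\sum\gamma^{b''}_{b,b'}t_{b''}$ where $\gamma^{b''}_{b,b'}$ is the constant term of $v^{-a(b)}r^{b''}_{b,b'}$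 if $b,b',b''$ lie in one cell and $0$ otherwise. $P_2$: $\mathfrak A^\infty$ has unit $\sum_{b\in\mathcal D}t_b$, $\mathcal D\subset B$ (distinguished elements), compatible with the basis. $P_3$: for $b_2\sim b_4$, $\sum_{\beta\sim b_2}r^\beta_{b_1,b_2}(v)r^{b_4}_{\beta,b_3}(v')=\sum_{\beta\sim b_2}r^{b_4}_{b_1,\beta}(v)r^\beta_{b_2,b_3}(v')$. $\Phi(b)=\sum_{b_1\in\mathcal D,b_2\in B,b_1\sim b_2}r^{b_2}_{b,b_1}t_{b_2}$, extended $\mathcal A$-linearly. *)

theory Defs
  imports "HOL-Computational_Algebra.Formal_Laurent_Series" "HOL-Library.Function_Algebras"
begin

text \<open>The ring Z[v,v^-1] is modelled as the subring of Laurent polynomials inside the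
  integer formal Laurent series (variable v = fls_X).\<close>
definition laurent :: "int fls set" where
  "laurent = {f. finite {n. fls_nth f n \<noteq> 0}}"

definition bvec :: "'b \<Rightarrow> 'b \<Rightarrow> 'k::zero_neq_one" where
  "bvec b = (\<lambda>c. if c = b then 1 else 0)"

definition indic :: "'b set \<Rightarrow> 'b \<Rightarrow> 'k::zero_neq_one" where
  "indic U = (\<lambda>c. if c \<in> U then 1 else 0)"

text \<open>Multiplication of the free module with basis 'b and structure constants c:
  b * b' = sum_b'' c b b' b'' b''.\<close>
definition amult :: "('b::finite \<Rightarrow> 'b \<Rightarrow> 'b \<Rightarrow> 'k::comm_ring_1) \<Rightarrow> ('b \<Rightarrow> 'k) \<Rightarrow> ('b \<Rightarrow> 'k) \<Rightarrow> ('b \<Rightarrow> 'k)" where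
  "amult c x y = (\<lambda>b''. \<Sum>b\<in>UNIV. \<Sum>b'\<in>UNIV. x b * y b' * c b b' b'')"

text \<open>Basis compatible with 1 (the unit is the sum of the basis elements in U), where S is the
  carrier of the algebra.\<close>
definition compat_one :: "('b::finite \<Rightarrow> 'b \<Rightarrow> 'b \<Rightarrow> 'k::comm_ring_1) \<Rightarrow> ('b \<Rightarrow> 'k) set \<Rightarrow> 'b set \<Rightarrow> bool" where
  "compat_one c S U \<longleftrightarrow>
     (\<forall>x\<in>S. amult c (indic U) x = x \<and> amult c x (indic U) = x) \<and>
     (\<forall>\<mu>\<in>U. \<forall>\<mu>'\<in>U. amult c (bvec \<mu>) (bvec \<mu>') = (if \<mu> = \<mu>' then bvec \<mu> else 0)) \<and>
     (\<forall>b. \<exists>\<mu>\<in>U. \<exists>\<mu>'\<in>U. bvec b = amult c (amult c (bvec \<mu>) (bvec b)) (bvec \<mu>'))"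

definition Aelts :: "('b \<Rightarrow> int fls) set" where
  "Aelts = {x. \<forall>b. x b \<in> laurent}"

definition lspan :: "'b set \<Rightarrow> ('b \<Rightarrow> int fls) set" where
  "lspan K = {x. (\<forall>b. x b \<in> laurent) \<and> (\<forall>b. b \<notin> K \<longrightarrow> x b = 0)}"

definition span_is_ideal :: "('b::finite \<Rightarrow> 'b \<Rightarrow> 'b \<Rightarrow> int fls) \<Rightarrow> 'b set \<Rightarrow> bool" where
  "span_is_ideal r K \<longleftrightarrow>
     (\<forall>x\<in>lspan K. \<forall>y\<in>Aelts. amult r x y \<in> lspan K \<and> amult r y x \<in> lspan K)"

definition cle :: "('b::finite \<Rightarrow> 'b \<Rightarrow> 'b \<Rightarrow> int fls) \<Rightarrow> 'b \<Rightarrow> 'b \<Rightarrow> bool" where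
  "cle r b' b \<longleftrightarrow> (\<forall>K. b \<in> K \<and> span_is_ideal r K \<longrightarrow> b' \<in> K)"

definition cellrel :: "('b::finite \<Rightarrow> 'b \<Rightarrow> 'b \<Rightarrow> int fls) \<Rightarrow> 'b \<Rightarrow> 'b \<Rightarrow> bool" where
  "cellrel r b b' \<longleftrightarrow> cle r b b' \<and> cle r b' b"

text \<open>a-function: least m with v^(-m) r in Z[v^-1] for b', b'' in the cell of b.\<close>
definition afun :: "('b::finite \<Rightarrow> 'b \<Rightarrow> 'b \<Rightarrow> int fls) \<Rightarrow> 'b \<Rightarrow> nat" where
  "afun r b = (LEAST m::nat. \<forall>b' b''. cellrel r b b' \<and> cellrel r b b'' \<longrightarrow>
       (\<forall>k>0. fls_nth (fls_shift (int m) (r b b' b'')) k = 0))"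

definition P1 :: "('b::finite \<Rightarrow> 'b \<Rightarrow> 'b \<Rightarrow> int fls) \<Rightarrow> bool" where
  "P1 r \<longleftrightarrow> (\<forall>b b'. cellrel r b b' \<longrightarrow> afun r b = afun r b')"

definition gam :: "('b::finite \<Rightarrow> 'b \<Rightarrow> 'b \<Rightarrow> int fls) \<Rightarrow> 'b \<Rightarrow> 'b \<Rightarrow> 'b \<Rightarrow> int" where
  "gam r b b' b'' = (if cellrel r b b' \<and> cellrel r b b''
      then fls_nth (fls_shift (int (afun r b)) (r b b' b'')) 0 else 0)"

definition P2 :: "('b::finite \<Rightarrow> 'b \<Rightarrow> 'b \<Rightarrow> int fls) \<Rightarrow> 'b set \<Rightarrow> bool" where
  "P2 r D \<longleftrightarrow> compat_one (gam r) UNIV D"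

text \<open>Two embeddings of Z[v,v^-1] into Z[v,v^-1,v',v'^-1] (modelled as Laurent series in v'
  with coefficients Laurent series in v): f \<mapsto> f(v) and f \<mapsto> f(v').\<close>
definition ev_v :: "int fls \<Rightarrow> int fls fls" where
  "ev_v f = fls_const f"

definition ev_v' :: "int fls \<Rightarrow> int fls fls" where
  "ev_v' f = (\<Sum>j\<in>{n. fls_nth f n \<noteq> 0}. fls_const (fls_const (fls_nth f j)) * fls_X_intpow j)"

definition P3 :: "('b::finite \<Rightarrow> 'b \<Rightarrow> 'b \<Rightarrow> int fls) \<Rightarrow> bool" where
  "P3 r \<longleftrightarrow> (\<forall>b1 b2 b3 b4. cellrel r b2 b4 \<longrightarrow>
     (\<Sum>\<beta>\<in>{\<beta>. cellrel r \<beta> b2}. ev_v (r b1 b2 \<beta>) * ev_v' (r \<beta> b3 b4)) =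
     (\<Sum>\<beta>\<in>{\<beta>. cellrel r \<beta> b2}. ev_v (r b1 \<beta> b4) * ev_v' (r b2 b3 \<beta>)))"

definition laurent_hom :: "(int fls \<Rightarrow> 'K::field) \<Rightarrow> bool" where
  "laurent_hom \<phi> \<longleftrightarrow> \<phi> 1 = 1 \<and>
     (\<forall>a\<in>laurent. \<forall>b\<in>laurent. \<phi> (a + b) = \<phi> a + \<phi> b \<and> \<phi> (a * b) = \<phi> a * \<phi> b)"

text \<open>Phi_K: K (x)_A A \<rightarrow> K (x)_Z A^infinity, on coefficient vectors w.r.t. B resp. (t_b).\<close>
definition PhiK :: "(int fls \<Rightarrow> 'K::field) \<Rightarrow> ('b::finite \<Rightarrow> 'b \<Rightarrow> 'b \<Rightarrow> int fls) \<Rightarrow> 'b set \<Rightarrow> ('b \<Rightarrow> 'K) \<Rightarrow> ('b \<Rightarrow> 'K)" where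
  "PhiK \<phi> r D x = (\<lambda>b2. \<Sum>b\<in>UNIV. x b * (\<Sum>b1\<in>{b1\<in>D. cellrel r b1 b2}. \<phi> (r b b1 b2)))"

definition left_ideal :: "('b::finite \<Rightarrow> 'b \<Rightarrow> 'b \<Rightarrow> 'K::field) \<Rightarrow> ('b \<Rightarrow> 'K) set \<Rightarrow> bool" where
  "left_ideal c I \<longleftrightarrow> 0 \<in> I \<and> (\<forall>x\<in>I. \<forall>y\<in>I. x + y \<in> I) \<and>
     (\<forall>x\<in>I. \<forall>a. (\<lambda>b. a * x b) \<in> I) \<and> (\<forall>x\<in>I. \<forall>y. amult c y x \<in> I)"

definition semisimple :: "('b::finite \<Rightarrow> 'b \<Rightarrow> 'b \<Rightarrow> 'K::field) \<Rightarrow> bool" where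
  "semisimple c \<longleftrightarrow> (\<forall>I. left_ideal c I \<longrightarrow>
     (\<exists>J. left_ideal c J \<and> I \<inter> J = {0} \<and> (\<forall>x. \<exists>u\<in>I. \<exists>w\<in>J. x = u + w)))"

end

theory Submission
  imports Defs
begin



lemma sum_swap_in:
  "(\<Sum>x\<in>A. \<Sum>y\<in>B. \<Sum>z\<in>C. f x y z) = (\<Sum>x\<in>A. \<Sum>z\<in>C. \<Sum>y\<in>B. f x y z)"
  by (rule sum.cong, simp, rule sum.swap)

lemma sum4_perm:
  "(\<Sum>p\<in>A. \<Sum>d\<in>B. \<Sum>a\<in>C. \<Sum>b\<in>E. f p d a b) = (\<Sum>a\<in>C. \<Sum>b\<in>E. \<Sum>d\<in>B. \<Sum>p\<in>A. f p d a b)"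
proof -
  have "(\<Sum>p\<in>A. \<Sum>d\<in>B. \<Sum>a\<in>C. \<Sum>b\<in>E. f p d a b) = (\<Sum>p\<in>A. \<Sum>a\<in>C. \<Sum>d\<in>B. \<Sum>b\<in>E. f p d a b)"
    by (rule sum_swap_in)
  also have "\<dots> = (\<Sum>p\<in>A. \<Sum>a\<in>C. \<Sum>b\<in>E. \<Sum>d\<in>B. f p d a b)"
    by (rule sum.cong, simp, rule sum_swap_in)
  also have "\<dots> = (\<Sum>a\<in>C. \<Sum>p\<in>A. \<Sum>b\<in>E. \<Sum>d\<in>B. f p d a b)"
    by (rule sum.swap)
  also have "\<dots> = (\<Sum>a\<in>C. \<Sum>b\<in>E. \<Sum>p\<in>A. \<Sum>d\<in>B. f p d a b)"
    by (rule sum_swap_in)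
  also have "\<dots> = (\<Sum>a\<in>C. \<Sum>b\<in>E. \<Sum>d\<in>B. \<Sum>p\<in>A. f p d a b)"
    by (rule sum.cong, simp, rule sum_swap_in)
  finally show ?thesis .
qed

lemma amult_assoc_gen:
  fixes c1 c2 c3 c4 :: "'b::finite \<Rightarrow> 'b \<Rightarrow> 'b \<Rightarrow> 'k::comm_ring_1"
  assumes h: "\<And>a b d e. (\<Sum>p\<in>UNIV. c1 a b p * c2 p d e) = (\<Sum>q\<in>UNIV. c3 b d q * c4 a q e)"
  shows "amult c2 (amult c1 x y) z = amult c4 x (amult c3 y z)"
proof
  fix e
  have "amult c2 (amult c1 x y) z e = (\<Sum>p\<in>UNIV. \<Sum>d\<in>UNIV. \<Sum>a\<in>UNIV. \<Sum>b\<in>UNIV. x a * y b * z d * (c1 a b p * c2 p d e))"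
    unfolding amult_def
    by (simp add: sum_distrib_left sum_distrib_right ac_simps)
  also have "\<dots> = (\<Sum>a\<in>UNIV. \<Sum>b\<in>UNIV. \<Sum>d\<in>UNIV. \<Sum>p\<in>UNIV. x a * y b * z d * (c1 a b p * c2 p d e))"
    by (rule sum4_perm)
  also have "\<dots> = (\<Sum>a\<in>UNIV. \<Sum>b\<in>UNIV. \<Sum>d\<in>UNIV. x a * y b * z d * (\<Sum>q\<in>UNIV. c3 b d q * c4 a q e))"
    by (simp add: sum_distrib_left[symmetric] h)
  also have "\<dots> = (\<Sum>a\<in>UNIV. \<Sum>b\<in>UNIV. \<Sum>d\<in>UNIV. \<Sum>q\<in>UNIV. x a * y b * z d * (c3 b d q * c4 a q e))"
    by (simp add: sum_distrib_left)
  also have "\<dots> = (\<Sum>a\<in>UNIV. \<Sum>q\<in>UNIV. \<Sum>b\<in>UNIV. \<Sum>d\<in>UNIV. x a * y b * z d * (c3 b d q * c4 a q e))"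
  proof (rule sum.cong, simp)
    fix a
    have "(\<Sum>b\<in>UNIV. \<Sum>d\<in>UNIV. \<Sum>q\<in>UNIV. x a * y b * z d * (c3 b d q * c4 a q e))
      = (\<Sum>b\<in>UNIV. \<Sum>q\<in>UNIV. \<Sum>d\<in>UNIV. x a * y b * z d * (c3 b d q * c4 a q e))"
      by (rule sum_swap_in)
    also have "\<dots> = (\<Sum>q\<in>UNIV. \<Sum>b\<in>UNIV. \<Sum>d\<in>UNIV. x a * y b * z d * (c3 b d q * c4 a q e))"
      by (rule sum.swap)
    finally show "(\<Sum>b\<in>UNIV. \<Sum>d\<in>UNIV. \<Sum>q\<in>UNIV. x a * y b * z d * (c3 b d q * c4 a q e))
      = (\<Sum>q\<in>UNIV. \<Sum>b\<in>UNIV. \<Sum>d\<in>UNIV. x a * y b * z d * (c3 b d q * c4 a q e))" .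
  qed
  also have "\<dots> = amult c4 x (amult c3 y z) e"
    unfolding amult_def
    by (simp add: sum_distrib_left sum_distrib_right ac_simps)
  finally show "amult c2 (amult c1 x y) z e = amult c4 x (amult c3 y z) e" .
qed




lemma amult_add_left: "amult c (x + y) z = amult c x z + amult c y z"
  unfolding amult_def by (auto simp: algebra_simps sum.distrib)
lemma amult_add_right: "amult c x (y + z) = amult c x y + amult c x z"
  unfolding amult_def by (auto simp: algebra_simps sum.distrib)
lemma amult_diff_left: "amult c (x - y) z = amult c x z - amult c y z"
  unfolding amult_def by (auto simp: algebra_simps sum_subtractf)
lemma amult_scale_left: "amult c (\<lambda>b. a * x b) z = (\<lambda>b. a * amult c x z b)"
  unfolding amult_def by (auto simp: algebra_simps sum_distrib_left)
lemma amult_zero_left[simp]: "amult c 0 z = 0"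
  unfolding amult_def by auto
lemma amult_zero_right[simp]: "amult c x 0 = 0"
  unfolding amult_def by auto

lemma amult_bvec_right: "amult c x (bvec b) e = (\<Sum>a\<in>UNIV. x a * c a b e)"
  unfolding amult_def bvec_def by (simp add: if_distrib if_distribR cong: if_cong)
lemma amult_bvec_left: "amult c (bvec a) y e = (\<Sum>b\<in>UNIV. y b * c a b e)"
  unfolding amult_def bvec_def by (subst sum.swap) (simp add: if_distrib if_distribR cong: if_cong)

lemma unit_left_gen:
  fixes c :: "'b::finite \<Rightarrow> 'b \<Rightarrow> 'b \<Rightarrow> 'k::comm_ring_1"
  assumes "\<And>b e. (\<Sum>a\<in>UNIV. u a * c a b e) = (if e = b then 1 else 0)"
  shows "amult c u z = z"
proof
  fix e
  have "amult c u z e = (\<Sum>b\<in>UNIV. z b * (\<Sum>a\<in>UNIV. u a * c a b e))"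
    unfolding amult_def by (subst sum.swap) (simp add: sum_distrib_left ac_simps)
  also have "\<dots> = z e" by (simp add: assms if_distrib cong: if_cong)
  finally show "amult c u z e = z e" .
qed

lemma unit_right_gen:
  fixes c :: "'b::finite \<Rightarrow> 'b \<Rightarrow> 'b \<Rightarrow> 'k::comm_ring_1"
  assumes "\<And>a e. (\<Sum>b\<in>UNIV. u b * c a b e) = (if e = a then 1 else 0)"
  shows "amult c z u = z"
proof
  fix e
  have "amult c z u e = (\<Sum>a\<in>UNIV. z a * (\<Sum>b\<in>UNIV. u b * c a b e))"
    unfolding amult_def by (simp add: sum_distrib_left ac_simps)
  also have "\<dots> = z e" by (simp add: assms if_distrib cong: if_cong)
  finally show "amult c z u e = z e" .
qed

lemma laurent_iff: "f \<in> laurent \<longleftrightarrow> (\<exists>N. \<forall>n>N. fls_nth f n = 0)"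
proof
  assume "f \<in> laurent"
  then have fin: "finite {n. fls_nth f n \<noteq> 0}" by (simp add: laurent_def)
  then have "bdd_above {n. fls_nth f n \<noteq> 0}" by (rule bdd_above_finite)
  then obtain N where "\<forall>n\<in>{n. fls_nth f n \<noteq> 0}. n \<le> N"
    by (auto simp: bdd_above_def)
  then show "\<exists>N. \<forall>n>N. fls_nth f n = 0" by (meson mem_Collect_eq not_le)
next
  assume "\<exists>N. \<forall>n>N. fls_nth f n = 0"
  then obtain N where N: "\<forall>n>N. fls_nth f n = 0" by blast
  have "{n. fls_nth f n \<noteq> 0} \<subseteq> {fls_subdegree f..N}"
    using N fls_subdegree_leI by (auto simp: not_less[symmetric])
  then show "f \<in> laurent" unfolding laurent_def by (auto intro: finite_subset)
qed

lemma laurent_add: "a \<in> laurent \<Longrightarrow> b \<in> laurent \<Longrightarrow> a + b \<in> laurent"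
proof -
  assume "a \<in> laurent" "b \<in> laurent"
  then obtain Na Nb where "\<forall>n>Na. fls_nth a n = 0" "\<forall>n>Nb. fls_nth b n = 0"
    unfolding laurent_iff by blast
  then have "\<forall>n>max Na Nb. fls_nth (a+b) n = 0" by auto
  then show ?thesis unfolding laurent_iff by blast
qed
lemma laurent_uminus: "a \<in> laurent \<Longrightarrow> - a \<in> laurent"
  unfolding laurent_iff by auto
lemma laurent_zero[simp]: "0 \<in> laurent"
  unfolding laurent_iff by auto
lemma laurent_const[simp]: "fls_const k \<in> laurent"
  unfolding laurent_iff by (auto intro: exI[of _ 0])
lemma laurent_one[simp]: "1 \<in> laurent"
  using laurent_const[of 1] by simp
lemma laurent_mult: "a \<in> laurent \<Longrightarrow> b \<in> laurent \<Longrightarrow> a * b \<in> laurent"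
proof -
  assume "a \<in> laurent" "b \<in> laurent"
  then obtain Na Nb where Na: "\<forall>n>Na. fls_nth a n = 0" and Nb: "\<forall>n>Nb. fls_nth b n = 0"
    unfolding laurent_iff by blast
  have "\<forall>n>Na+Nb. fls_nth (a*b) n = 0"
  proof (intro allI impI)
    fix n assume n: "n > Na + Nb"
    have "fls_nth (a*b) n = (\<Sum>i=fls_subdegree a..n - fls_subdegree b. fls_nth a i * fls_nth b (n - i))"
      by (rule fls_times_nth(2))
    also have "\<dots> = 0"
    proof (rule sum.neutral, intro ballI)
      fix i
      show "fls_nth a i * fls_nth b (n - i) = 0"
        using Na Nb n by (cases "i > Na") auto
    qed
    finally show "fls_nth (a*b) n = 0" .
  qed
  then show ?thesis unfolding laurent_iff by blast
qed
lemma laurent_sum: "(\<And>i. i \<in> S \<Longrightarrow> f i \<in> laurent) \<Longrightarrow> sum f S \<in> laurent"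
  by (induction S rule: infinite_finite_induct) (auto intro: laurent_add)

lemma hom_zero: "laurent_hom \<phi> \<Longrightarrow> \<phi> 0 = 0"
proof -
  assume "laurent_hom \<phi>"
  then have "\<phi> (0 + 0) = \<phi> 0 + \<phi> 0" unfolding laurent_hom_def using laurent_zero by blast
  then have "\<phi> 0 + \<phi> 0 = \<phi> 0 + 0" by simp
  then show ?thesis by (simp only: add_left_cancel)
qed
lemma hom_add: "laurent_hom \<phi> \<Longrightarrow> a \<in> laurent \<Longrightarrow> b \<in> laurent \<Longrightarrow> \<phi> (a + b) = \<phi> a + \<phi> b"
  unfolding laurent_hom_def by blast
lemma hom_mult: "laurent_hom \<phi> \<Longrightarrow> a \<in> laurent \<Longrightarrow> b \<in> laurent \<Longrightarrow> \<phi> (a * b) = \<phi> a * \<phi> b"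
  unfolding laurent_hom_def by blast
lemma hom_one: "laurent_hom \<phi> \<Longrightarrow> \<phi> 1 = 1"
  unfolding laurent_hom_def by blast
lemma hom_sum: "laurent_hom \<phi> \<Longrightarrow> (\<And>i. i \<in> S \<Longrightarrow> f i \<in> laurent) \<Longrightarrow> \<phi> (sum f S) = (\<Sum>i\<in>S. \<phi> (f i))"
  by (induction S rule: infinite_finite_induct) (auto simp: hom_zero hom_add laurent_sum)
lemma hom_uminus: "laurent_hom \<phi> \<Longrightarrow> a \<in> laurent \<Longrightarrow> \<phi> (- a) = - \<phi> a"
  using hom_add[of \<phi> a "-a"] hom_zero[of \<phi>] laurent_uminus[of a]
  by (simp add: eq_neg_iff_add_eq_0 add.commute)
lemma hom_of_nat: "laurent_hom \<phi> \<Longrightarrow> \<phi> (of_nat n) = of_nat n"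
proof (induction n)
  case 0 then show ?case by (simp add: hom_zero)
next
  case (Suc n)
  have "of_nat n \<in> laurent" using laurent_const[of "of_nat n"] by (simp add: fls_of_nat)
  then show ?case using Suc hom_add[of \<phi> 1 "of_nat n"] hom_one[of \<phi>] by simp
qed
lemma hom_const: "laurent_hom \<phi> \<Longrightarrow> \<phi> (fls_const k) = of_int k"
proof (cases "k \<ge> 0")
  case True
  assume h: "laurent_hom \<phi>"
  have "fls_const k = of_nat (nat k)" using True by (simp add: fls_of_nat)
  then show ?thesis using hom_of_nat[OF h, of "nat k"] True by simp
next
  case False
  assume h: "laurent_hom \<phi>"
  have e: "fls_const k = - of_nat (nat (-k))" using False by (simp add: fls_of_nat)
  have l: "of_nat (nat (-k)) \<in> laurent" using laurent_const[of "of_nat (nat (-k))"] by (simp add: fls_of_nat)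
  have "\<phi> (fls_const k) = - \<phi> (of_nat (nat (-k)))" unfolding e using hom_uminus[OF h l] .
  also have "\<dots> = - of_nat (nat (-k))" using hom_of_nat[OF h] by simp
  also have "\<dots> = of_int k" using False by simp
  finally show ?thesis .
qed




lemma amult_bvec_bvec: "amult c (bvec a) (bvec b) e = c a b e"
proof -
  have "\<And>x. bvec b x * c a x e = (if x = b then c a b e else 0)" by (simp add: bvec_def)
  then show ?thesis by (simp only: amult_bvec_left) simp
qed

lemma cle_refl: "cle r b b" by (simp add: cle_def)
lemma cle_trans: "cle r a b \<Longrightarrow> cle r b c \<Longrightarrow> cle r a c" unfolding cle_def by blast
lemma cellrel_refl: "cellrel r b b" by (simp add: cellrel_def cle_refl)
lemma cellrel_sym: "cellrel r a b \<Longrightarrow> cellrel r b a" by (simp add: cellrel_def)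
lemma cellrel_trans: "cellrel r a b \<Longrightarrow> cellrel r b c \<Longrightarrow> cellrel r a c"
  unfolding cellrel_def using cle_trans by blast

lemma bvec_laurent[simp]: "bvec b c \<in> laurent" by (simp add: bvec_def)
lemma bvec_Aelts[simp]: "bvec b \<in> Aelts" by (simp add: Aelts_def)
lemma bvec_lspan: "b \<in> K \<Longrightarrow> bvec b \<in> lspan K" by (simp add: lspan_def bvec_def)

lemma r_left_cle:
  fixes r :: "'b::finite \<Rightarrow> 'b \<Rightarrow> 'b \<Rightarrow> int fls"
  assumes "r b b2 \<beta> \<noteq> 0" shows "cle r \<beta> b2"
  unfolding cle_def
proof (intro allI impI)
  fix K assume K: "b2 \<in> K \<and> span_is_ideal r K"
  then have "amult r (bvec b) (bvec b2) \<in> lspan K"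
    unfolding span_is_ideal_def using bvec_lspan[of b2 K] bvec_Aelts[of b] by blast
  then show "\<beta> \<in> K" using assms amult_bvec_bvec[of r b b2 \<beta>] unfolding lspan_def by auto
qed

lemma ev_v'_nth:
  assumes "f \<in> laurent" shows "fls_nth (ev_v' f) m = fls_const (fls_nth f m)"
proof -
  let ?S = "{n. fls_nth f n \<noteq> 0}"
  have fin: "finite ?S" using assms by (simp add: laurent_def)
  have "fls_nth (ev_v' f) m = (\<Sum>j\<in>?S. fls_const (fls_nth f j) * (if m = j then 1 else 0))"
    unfolding ev_v'_def fls_nth_sum by (intro sum.cong) (auto simp: fls_X_intpow_times_conv_shift)
  also have "\<dots> = (if m \<in> ?S then fls_const (fls_nth f m) else 0)"
    using fin by (simp add: if_distrib cong: if_cong)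
  also have "\<dots> = fls_const (fls_nth f m)" by auto
  finally show ?thesis .
qed




locale thm7ctx =
  fixes r :: "'b::finite \<Rightarrow> 'b \<Rightarrow> 'b \<Rightarrow> int fls"
    and U D :: "'b set"
    and \<phi> :: "int fls \<Rightarrow> 'K::field"
  assumes r_laurent: "\<forall>b b' b''. r b b' b'' \<in> laurent"
    and assoc: "\<forall>x\<in>Aelts. \<forall>y\<in>Aelts. \<forall>z\<in>Aelts. amult r (amult r x y) z = amult r x (amult r y z)"
    and one: "compat_one r Aelts U"
    and P1: "P1 r" and P2: "P2 r D" and P3: "P3 r"
    and hom: "laurent_hom \<phi>"
begin

definition c :: "'b \<Rightarrow> 'b \<Rightarrow> 'b \<Rightarrow> 'K" where "c b b' b'' = \<phi> (r b b' b'')"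
definition ct :: "'b \<Rightarrow> 'b \<Rightarrow> 'b \<Rightarrow> 'K" where
  "ct b b2 \<beta> = (if cellrel r b2 \<beta> then c b b2 \<beta> else 0)"
definition gK :: "'b \<Rightarrow> 'b \<Rightarrow> 'b \<Rightarrow> 'K" where "gK b b' b'' = of_int (gam r b b' b'')"

lemma rl[simp]: "r a b e \<in> laurent" using r_laurent by blast

lemma c_nz: "c a b e \<noteq> 0 \<Longrightarrow> cle r e b"
proof -
  assume "c a b e \<noteq> 0"
  then have "r a b e \<noteq> 0" using hom_zero[OF hom] unfolding c_def by force
  then show ?thesis by (rule r_left_cle)
qed

lemma assoc_r: "(\<Sum>p\<in>UNIV. r a b p * r p d e) = (\<Sum>q\<in>UNIV. r b d q * r a q e)"
proof -
  have e1: "amult r (bvec a) (bvec b) = (\<lambda>p. r a b p)" by (rule ext) (rule amult_bvec_bvec)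
  have e2: "amult r (bvec b) (bvec d) = (\<lambda>p. r b d p)" by (rule ext) (rule amult_bvec_bvec)
  have "amult r (amult r (bvec a) (bvec b)) (bvec d) e = amult r (bvec a) (amult r (bvec b) (bvec d)) e"
    using assoc by simp
  then show ?thesis unfolding e1 e2 amult_bvec_left amult_bvec_right by (simp add: ac_simps)
qed

lemma assoc_c: "(\<Sum>p\<in>UNIV. c a b p * c p d e) = (\<Sum>q\<in>UNIV. c b d q * c a q e)"
proof -
  have "\<phi> (\<Sum>p\<in>UNIV. r a b p * r p d e) = \<phi> (\<Sum>q\<in>UNIV. r b d q * r a q e)"
    using assoc_r by simp
  then show ?thesis
    by (simp add: hom_sum[OF hom] laurent_mult hom_mult[OF hom] c_def)
qed

lemma assocK: "amult c (amult c x y) z = amult c x (amult c y z)"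
  by (rule amult_assoc_gen) (rule assoc_c)

lemma hom_indic: "\<phi> (indic S a) = indic S a"
  by (simp add: indic_def hom_one[OF hom] hom_zero[OF hom])
lemma hom_delta: "\<phi> (if P then 1 else 0) = (if P then 1 else 0)"
  by (simp add: hom_one[OF hom] hom_zero[OF hom])
lemma indic_laurent[simp]: "indic S a \<in> laurent" by (simp add: indic_def)

lemma unitU_left_c: "(\<Sum>a\<in>UNIV. indic U a * c a b e) = (if e = b then 1 else 0)"
proof -
  have "amult r (indic U) (bvec b) = bvec b" using one unfolding compat_one_def by simp
  then have "amult r (indic U) (bvec b) e = bvec b e" by simp
  then have "(\<Sum>a\<in>UNIV. indic U a * r a b e) = (if e = b then 1 else 0)"
    unfolding amult_bvec_right by (simp add: bvec_def)
  then have "\<phi> (\<Sum>a\<in>UNIV. indic U a * r a b e) = \<phi> (if e = b then 1 else 0)" by simp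
  then show ?thesis
    by (simp add: hom_sum[OF hom] laurent_mult hom_mult[OF hom] c_def hom_indic hom_delta del: if_image_distrib)
qed

lemma unitU_right_c: "(\<Sum>b\<in>UNIV. indic U b * c a b e) = (if e = a then 1 else 0)"
proof -
  have "amult r (bvec a) (indic U) = bvec a" using one unfolding compat_one_def by simp
  then have "amult r (bvec a) (indic U) e = bvec a e" by simp
  then have "(\<Sum>b\<in>UNIV. indic U b * r a b e) = (if e = a then 1 else 0)"
    unfolding amult_bvec_left by (simp add: bvec_def)
  then have "\<phi> (\<Sum>b\<in>UNIV. indic U b * r a b e) = \<phi> (if e = a then 1 else 0)" by simp
  then show ?thesis
    by (simp add: hom_sum[OF hom] laurent_mult hom_mult[OF hom] c_def hom_indic hom_delta del: if_image_distrib)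
qed

lemma unitK_left: "amult c (indic U) z = z"
  by (rule unit_left_gen) (rule unitU_left_c)
lemma unitK_right: "amult c z (indic U) = z"
  by (rule unit_right_gen) (rule unitU_right_c)

lemma unit_ct: "amult ct (indic U) z = z"
proof (rule unit_left_gen)
  fix b e
  have "(\<Sum>a\<in>UNIV. indic U a * ct a b e) = (if cellrel r b e then (\<Sum>a\<in>UNIV. indic U a * c a b e) else 0)"
    unfolding ct_def by auto
  also have "\<dots> = (if e = b then 1 else 0)" using unitU_left_c cellrel_refl by auto
  finally show "(\<Sum>a\<in>UNIV. indic U a * ct a b e) = (if e = b then 1 else 0)" .
qed

lemma unit_gK: "amult gK (indic D) z = z"
proof (rule unit_left_gen)
  fix b e
  have "amult (gam r) (indic D) (bvec b) = bvec b" using P2 unfolding P2_def compat_one_def by simp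
  then have "amult (gam r) (indic D) (bvec b) e = bvec b e" by simp
  then have "(\<Sum>a\<in>UNIV. indic D a * gam r a b e) = (if e = b then 1 else 0)"
    unfolding amult_bvec_right by (simp add: bvec_def)
  then have "of_int (\<Sum>a\<in>UNIV. indic D a * gam r a b e) = (of_int (if e = b then 1 else 0) :: 'K)" by simp
  moreover have "\<And>a. (of_int (indic D a) :: 'K) = indic D a" by (simp add: indic_def)
  ultimately show "(\<Sum>a\<in>UNIV. indic D a * gK a b e) = (if e = b then 1 else 0)"
    unfolding gK_def by (simp add: of_int_sum del: if_image_distrib)
qed

end



lemma sum_UNIV_if: "(\<Sum>x\<in>(UNIV::'a::finite set). if P x then f x else 0) = sum f {x. P x}"
  using sum.inter_filter[of UNIV f P] by simp

context thm7ctx begin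

lemma ct_zero: "c a b e = 0 \<Longrightarrow> ct a b e = 0" by (simp add: ct_def)

lemma F2c: "(\<Sum>p\<in>UNIV. c a b p * ct p d e) = (\<Sum>q\<in>UNIV. ct b d q * ct a q e)"
proof (cases "cellrel r d e")
  case True
  have "(\<Sum>q\<in>UNIV. ct b d q * ct a q e) = (\<Sum>q\<in>UNIV. c b d q * c a q e)"
  proof (rule sum.cong)
    fix q
    show "ct b d q * ct a q e = c b d q * c a q e"
    proof (cases "c b d q = 0 \<or> c a q e = 0")
      case True then show ?thesis using ct_zero by auto
    next
      case False
      then have q1: "cle r q d" and q2: "cle r e q" using c_nz by auto
      have "cellrel r d q" "cellrel r q e"
        using True q1 q2 cle_trans unfolding cellrel_def by blast+
      then show ?thesis by (simp add: ct_def)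
    qed
  qed simp
  moreover have "(\<Sum>p\<in>UNIV. c a b p * ct p d e) = (\<Sum>p\<in>UNIV. c a b p * c p d e)"
    using True by (simp add: ct_def)
  ultimately show ?thesis using assoc_c by simp
next
  case False
  have "(\<Sum>q\<in>UNIV. ct b d q * ct a q e) = 0"
  proof (rule sum.neutral, intro ballI)
    fix q
    show "ct b d q * ct a q e = 0" using False cellrel_trans[of r d q e] by (auto simp: ct_def)
  qed
  moreover have "(\<Sum>p\<in>UNIV. c a b p * ct p d e) = 0" using False by (simp add: ct_def)
  ultimately show ?thesis by simp
qed

lemma F2: "amult ct (amult c x y) z = amult ct x (amult ct y z)"
  by (rule amult_assoc_gen) (rule F2c)

lemma P3_c:
  assumes be: "cellrel r b e"
  shows "(\<Sum>\<beta>\<in>{\<beta>. cellrel r \<beta> b}. c a b \<beta> * of_int (fls_nth (r \<beta> d e) m))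
       = (\<Sum>\<beta>\<in>{\<beta>. cellrel r \<beta> b}. c a \<beta> e * of_int (fls_nth (r b d \<beta>) m))"
proof -
  let ?C = "{\<beta>. cellrel r \<beta> b}"
  have "(\<Sum>\<beta>\<in>?C. ev_v (r a b \<beta>) * ev_v' (r \<beta> d e)) = (\<Sum>\<beta>\<in>?C. ev_v (r a \<beta> e) * ev_v' (r b d \<beta>))"
    using P3 be unfolding P3_def by blast
  then have "fls_nth (\<Sum>\<beta>\<in>?C. ev_v (r a b \<beta>) * ev_v' (r \<beta> d e)) m = fls_nth (\<Sum>\<beta>\<in>?C. ev_v (r a \<beta> e) * ev_v' (r b d \<beta>)) m"
    by simp
  then have "(\<Sum>\<beta>\<in>?C. r a b \<beta> * fls_const (fls_nth (r \<beta> d e) m)) = (\<Sum>\<beta>\<in>?C. r a \<beta> e * fls_const (fls_nth (r b d \<beta>) m))"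
    unfolding fls_nth_sum ev_v_def fls_mult_const_nth by (simp add: ev_v'_nth)
  then have "\<phi> (\<Sum>\<beta>\<in>?C. r a b \<beta> * fls_const (fls_nth (r \<beta> d e) m)) = \<phi> (\<Sum>\<beta>\<in>?C. r a \<beta> e * fls_const (fls_nth (r b d \<beta>) m))"
    by simp
  then show ?thesis
    by (simp add: hom_sum[OF hom] laurent_mult hom_mult[OF hom] c_def hom_const[OF hom])
qed

lemma gam_eq: "gam r p d e = (if cellrel r p d \<and> cellrel r p e then fls_nth (r p d e) (int (afun r p)) else 0)"
  by (simp add: gam_def)

lemma afun_eq: "cellrel r b p \<Longrightarrow> afun r p = afun r b"
  using P1 unfolding P1_def by metis

lemma F1c: "(\<Sum>p\<in>UNIV. ct a b p * gK p d e) = (\<Sum>q\<in>UNIV. gK b d q * ct a q e)"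
proof (cases "cellrel r b e \<and> cellrel r b d")
  case True
  let ?C = "{\<beta>. cellrel r \<beta> b}"
  let ?m = "int (afun r b)"
  have "(\<Sum>p\<in>UNIV. ct a b p * gK p d e) = (\<Sum>p\<in>UNIV. if p \<in> ?C then c a b p * of_int (fls_nth (r p d e) ?m) else 0)"
  proof (rule sum.cong)
    fix p
    show "ct a b p * gK p d e = (if p \<in> ?C then c a b p * of_int (fls_nth (r p d e) ?m) else 0)"
    proof (cases "cellrel r b p")
      case T: True
      then have "cellrel r p d" "cellrel r p e" "p \<in> ?C"
        using True cellrel_sym cellrel_trans by blast+
      then show ?thesis using T afun_eq[OF T] by (simp add: ct_def gK_def gam_eq)
    next
      case False
      then show ?thesis using cellrel_sym by (auto simp: ct_def)
    qed
  qed simp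
  also have "\<dots> = (\<Sum>p\<in>?C. c a b p * of_int (fls_nth (r p d e) ?m))"
    by (simp only: mem_Collect_eq sum_UNIV_if)
  also have "\<dots> = (\<Sum>q\<in>?C. c a q e * of_int (fls_nth (r b d q) ?m))"
    using P3_c True by blast
  also have "\<dots> = (\<Sum>q\<in>UNIV. if q \<in> ?C then c a q e * of_int (fls_nth (r b d q) ?m) else 0)"
    by (simp only: mem_Collect_eq sum_UNIV_if)
  also have "\<dots> = (\<Sum>q\<in>UNIV. gK b d q * ct a q e)"
  proof (rule sum.cong)
    fix q
    show "(if q \<in> ?C then c a q e * of_int (fls_nth (r b d q) ?m) else 0) = gK b d q * ct a q e"
    proof (cases "cellrel r q b")
      case T: True
      then have "cellrel r b q" "cellrel r q e"
        using True cellrel_sym cellrel_trans by blast+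
      then show ?thesis using T True by (simp add: ct_def gK_def gam_eq)
    next
      case False
      then show ?thesis using cellrel_sym by (auto simp: gK_def gam_eq)
    qed
  qed simp
  finally show ?thesis .
next
  case False
  have "(\<Sum>p\<in>UNIV. ct a b p * gK p d e) = 0"
  proof (rule sum.neutral, intro ballI)
    fix p
    show "ct a b p * gK p d e = 0"
      using False cellrel_sym cellrel_trans by (auto simp: ct_def gK_def gam_eq) blast+
  qed
  moreover have "(\<Sum>q\<in>UNIV. gK b d q * ct a q e) = 0"
  proof (rule sum.neutral, intro ballI)
    fix q
    show "gK b d q * ct a q e = 0"
      using False cellrel_sym cellrel_trans by (auto simp: ct_def gK_def gam_eq) blast+
  qed
  ultimately show ?thesis by simp
qed

lemma F1: "amult gK (amult ct x y) z = amult ct x (amult gK y z)"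
  by (rule amult_assoc_gen) (rule F1c)

end



lemma fun_sum_apply: "(\<Sum>i\<in>S. f i) x = (\<Sum>i\<in>S. f i x)"
  by (induction S rule: infinite_finite_induct) auto

lemma mult_delta1: "(a::'a::semiring_1) * (if P then 1 else 0) = (if P then a else 0)" by simp

lemma linear_inj_surj_fun:
  fixes f :: "('b::finite \<Rightarrow> 'K::field) \<Rightarrow> ('b \<Rightarrow> 'K)"
  assumes add: "\<forall>x y. f (x + y) = f x + f y"
    and scale: "\<forall>a x. f (\<lambda>b. a * x b) = (\<lambda>b. a * f x b)"
    and inj: "inj f"
  shows "surj f"
proof -
  define s :: "'K \<Rightarrow> ('b \<Rightarrow> 'K) \<Rightarrow> ('b \<Rightarrow> 'K)" where "s = (\<lambda>a x. (\<lambda>b. a * x b))"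
  have vs: "vector_space s"
    by unfold_locales (auto simp: s_def fun_eq_iff algebra_simps)
  interpret vs: vector_space s by (rule vs)
  have bv: "bvec b = (bvec b :: 'b \<Rightarrow> 'K)" for b ..
  have sumv: "(\<Sum>v\<in>t. g v) b = (\<Sum>v\<in>t. g v b)" for t and g :: "('b \<Rightarrow> 'K) \<Rightarrow> 'b \<Rightarrow> 'K" and b
    by (rule fun_sum_apply)
  have indep: "vs.independent (range (bvec :: 'b \<Rightarrow> 'b \<Rightarrow> 'K))"
    unfolding vs.dependent_explicit
  proof clarify
    fix t u v
    assume t: "finite t" "t \<subseteq> range (bvec :: 'b \<Rightarrow> 'b \<Rightarrow> 'K)" "(\<Sum>v\<in>t. s (u v) v) = 0" "v \<in> t" "u v \<noteq> 0"
    then obtain b where vb: "v = bvec b" by auto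
    have "0 = (\<Sum>w\<in>t. s (u w) w) b" using t by simp
    also have "\<dots> = (\<Sum>w\<in>t. u w * w b)" by (simp add: sumv s_def)
    also have "\<dots> = (\<Sum>w\<in>t. if w = v then u v else 0)"
    proof (rule sum.cong)
      fix w assume "w \<in> t"
      then obtain b' where wb: "w = bvec b'" using t by auto
      show "u w * w b = (if w = v then u v else 0)"
      proof (cases "w = v")
        case True then show ?thesis by (simp add: vb bvec_def)
      next
        case False then have "b' \<noteq> b" using vb wb by auto
        then show ?thesis using False by (simp add: wb bvec_def)
      qed
    qed simp
    also have "\<dots> = u v" using t by simp
    finally show False using t by simp
  qed
  have span: "vs.span (range (bvec :: 'b \<Rightarrow> 'b \<Rightarrow> 'K)) = UNIV"
  proof (rule set_eqI, rule iffI, simp)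
    fix x :: "'b \<Rightarrow> 'K"
    have "x = (\<Sum>b\<in>UNIV. s (x b) (bvec b))"
      by (auto simp: fun_eq_iff fun_sum_apply s_def bvec_def mult_delta1 cong: if_cong)
    also have "\<dots> \<in> vs.span (range bvec)"
      by (intro vs.span_sum vs.span_scale vs.span_base) auto
    finally show "x \<in> vs.span (range bvec)" .
  qed
  interpret fd: finite_dimensional_vector_space s "range (bvec :: 'b \<Rightarrow> 'b \<Rightarrow> 'K)"
    by unfold_locales (auto simp: indep span)
  have lin: "Vector_Spaces.linear s s f"
    unfolding Vector_Spaces.linear_iff using vs add scale by (simp add: s_def)
  show ?thesis by (rule fd.linear_inj_imp_surj[OF lin inj])
qed




lemma li_mult: "left_ideal c I \<Longrightarrow> x \<in> I \<Longrightarrow> amult c y x \<in> I"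
  unfolding left_ideal_def by blast
lemma li_add: "left_ideal c I \<Longrightarrow> x \<in> I \<Longrightarrow> y \<in> I \<Longrightarrow> x + y \<in> I"
  unfolding left_ideal_def by blast
lemma li_scale: "left_ideal c I \<Longrightarrow> x \<in> I \<Longrightarrow> (\<lambda>b. a * x b) \<in> I"
  unfolding left_ideal_def by blast
lemma ss_split: "semisimple c \<Longrightarrow> left_ideal c I \<Longrightarrow>
   \<exists>J. left_ideal c J \<and> I \<inter> J = {0} \<and> (\<forall>x. \<exists>u\<in>I. \<exists>w\<in>J. x = u + w)"
  unfolding semisimple_def by blast

context thm7ctx begin

abbreviation Phi where "Phi \<equiv> PhiK \<phi> r D"

lemma Phi_eq: "Phi x = amult ct x (indic D)"
proof
  fix b2
  have inner: "(\<Sum>b1\<in>{b1\<in>D. cellrel r b1 b2}. \<phi> (r b b1 b2)) = (\<Sum>b1\<in>UNIV. indic D b1 * ct b b1 b2)" for b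
  proof -
    have "(\<Sum>b1\<in>UNIV. indic D b1 * ct b b1 b2) = (\<Sum>b1\<in>UNIV. if b1 \<in> D \<and> cellrel r b1 b2 then c b b1 b2 else 0)"
      by (rule sum.cong) (auto simp: indic_def ct_def)
    also have "\<dots> = (\<Sum>b1\<in>{b1\<in>D. cellrel r b1 b2}. c b b1 b2)"
      by (simp only: sum_UNIV_if)
    finally show ?thesis by (simp add: c_def)
  qed
  show "Phi x b2 = amult ct x (indic D) b2"
    unfolding PhiK_def amult_def inner by (simp add: sum_distrib_left ac_simps)
qed

lemma act_eq: "amult ct x z = amult gK (Phi x) z"
proof -
  have "amult ct x z = amult ct x (amult gK (indic D) z)" by (simp add: unit_gK)
  also have "\<dots> = amult gK (amult ct x (indic D)) z" by (simp add: F1)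
  finally show ?thesis by (simp add: Phi_eq)
qed

lemma Phi_mult: "Phi (amult c x y) = amult gK (Phi x) (Phi y)"
proof -
  have "Phi (amult c x y) = amult ct x (amult ct y (indic D))" by (simp add: Phi_eq F2)
  also have "\<dots> = amult ct x (Phi y)" by (simp add: Phi_eq)
  also have "\<dots> = amult gK (Phi x) (Phi y)" by (rule act_eq)
  finally show ?thesis .
qed

lemma Phi_one: "Phi (indic U) = indic D"
  by (simp add: Phi_eq unit_ct)

lemma Phi_add: "Phi (x + y) = Phi x + Phi y"
  by (simp add: Phi_eq amult_add_left)
lemma Phi_diff: "Phi (x - y) = Phi x - Phi y"
  by (simp add: Phi_eq amult_diff_left)
lemma Phi_scale: "Phi (\<lambda>b. a * x b) = (\<lambda>b. a * Phi x b)"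
  by (simp add: Phi_eq amult_scale_left)
lemma Phi_zero: "Phi 0 = 0"
  by (simp add: Phi_eq)

definition rho :: "'b \<Rightarrow> nat" where "rho b = card {\<gamma>. cle r \<gamma> b}"

lemma rho_less: "cle r \<beta> b \<Longrightarrow> \<not> cle r b \<beta> \<Longrightarrow> rho \<beta> < rho b"
  unfolding rho_def
  by (rule psubset_card_mono) (auto intro: cle_trans cle_refl)

lemma rho_le: "rho b < Suc (card (UNIV :: 'b set))"
  unfolding rho_def using card_mono[of UNIV "{\<gamma>. cle r \<gamma> b}"] by simp

lemma ker_act: "Phi x = 0 \<Longrightarrow> cellrel r b \<beta> \<Longrightarrow> (\<Sum>a\<in>UNIV. x a * c a b \<beta>) = 0"
proof -
  assume P: "Phi x = 0" and cr: "cellrel r b \<beta>"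
  have "amult ct x (bvec b) \<beta> = 0" using act_eq[of x "bvec b"] P by simp
  then show ?thesis unfolding amult_bvec_right using cr by (simp add: ct_def)
qed

lemma nil:
  assumes P: "Phi u = 0" and uu: "amult c u u = u"
  shows "(\<forall>b. y b \<noteq> 0 \<longrightarrow> rho b < n) \<Longrightarrow> amult c u y = 0"
proof (induction n arbitrary: y)
  case 0
  then have "y = 0" by (auto simp: fun_eq_iff)
  then show ?case by (simp only: amult_zero_right)
next
  case (Suc n)
  let ?y = "amult c u y"
  have "\<forall>\<beta>. ?y \<beta> \<noteq> 0 \<longrightarrow> rho \<beta> < n"
  proof (intro allI impI)
    fix \<beta> assume nz: "?y \<beta> \<noteq> 0"
    have "?y \<beta> = (\<Sum>b\<in>UNIV. y b * (\<Sum>a\<in>UNIV. u a * c a b \<beta>))"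
      unfolding amult_def by (subst sum.swap) (simp add: sum_distrib_left ac_simps)
    with nz obtain b where b1: "y b * (\<Sum>a\<in>UNIV. u a * c a b \<beta>) \<noteq> 0"
      by (metis (mono_tags, lifting) sum.neutral)
    then have yb: "y b \<noteq> 0" and S: "(\<Sum>a\<in>UNIV. u a * c a b \<beta>) \<noteq> 0" by auto
    from S obtain a where "u a * c a b \<beta> \<noteq> 0" by (metis (mono_tags, lifting) sum.neutral)
    then have "c a b \<beta> \<noteq> 0" by auto
    then have le: "cle r \<beta> b" by (rule c_nz)
    have "\<not> cellrel r b \<beta>" using S ker_act[OF P] by auto
    then have "\<not> cle r b \<beta>" using le unfolding cellrel_def by auto
    then have "rho \<beta> < rho b" using le rho_less by auto
    moreover have "rho b < Suc n" using Suc.prems yb by auto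
    ultimately show "rho \<beta> < n" by simp
  qed
  then have "amult c u ?y = 0" by (rule Suc.IH)
  moreover have "amult c u ?y = amult c u y" using assocK[of u u y] uu by simp
  ultimately show ?case by simp
qed

lemma c_lam: "(\<lambda>b b' b''. \<phi> (r b b' b'')) = c" by (simp add: c_def fun_eq_iff)

lemma ker0:
  assumes ss: "semisimple c" and P: "Phi x = 0"
  shows "x = 0"
proof -
  let ?I = "{x. Phi x = 0}"
  have li: "left_ideal c ?I"
    unfolding left_ideal_def
  proof (intro conjI ballI allI)
    show "0 \<in> ?I" by (simp add: Phi_zero)
    show "x + y \<in> ?I" if "x \<in> ?I" "y \<in> ?I" for x y using that by (simp add: Phi_add)
    show "(\<lambda>b. a * x b) \<in> ?I" if "x \<in> ?I" for x a
    proof -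
      have "Phi (\<lambda>b. a * x b) = (\<lambda>b. a * Phi x b)" by (rule Phi_scale)
      also have "\<dots> = 0" using that by (simp add: fun_eq_iff)
      finally show ?thesis by simp
    qed
    show "amult c y x \<in> ?I" if "x \<in> ?I" for x y
      using that by (simp only: Phi_mult mem_Collect_eq amult_zero_right)
  qed
  obtain J where J: "left_ideal c J" "?I \<inter> J = {0}" "\<forall>x. \<exists>u\<in>?I. \<exists>w\<in>J. x = u + w"
    using ss_split[OF ss li] by (elim exE conjE) simp
  from J(3) obtain u w where u: "u \<in> ?I" and w: "w \<in> J" and uw: "indic U = u + w"
    by (elim allE[of _ "indic U"] bexE) simp
  have key: "amult c x u = x" if xI: "x \<in> ?I" for x
  proof -
    have "x = amult c x u + amult c x w" using unitK_right[of x] uw by (simp add: amult_add_right)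
    moreover have xu: "amult c x u \<in> ?I" by (rule li_mult[OF li u])
    moreover have "amult c x w \<in> J" by (rule li_mult[OF J(1) w])
    moreover have "x + (\<lambda>b. (-1) * amult c x u b) \<in> ?I"
      by (rule li_add[OF li xI li_scale[OF li xu]])
    moreover have "x + (\<lambda>b. (-1) * amult c x u b) = x - amult c x u" by (auto simp: fun_eq_iff)
    ultimately have "amult c x w \<in> ?I \<inter> J"
    proof -
      assume e: "x = amult c x u + amult c x w" and "amult c x u \<in> ?I" and wJ: "amult c x w \<in> J"
        and m: "x + (\<lambda>b. (-1) * amult c x u b) \<in> ?I" and e2: "x + (\<lambda>b. (-1) * amult c x u b) = x - amult c x u"
      have "amult c x w = x - amult c x u" using e by (simp add: algebra_simps)
      then have "amult c x w \<in> ?I" using m e2 by simp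
      then show ?thesis using wJ by blast
    qed
    then have "amult c x w = 0" using J(2) by auto
    then show ?thesis using \<open>x = amult c x u + amult c x w\<close> by simp
  qed
  have uu: "amult c u u = u" by (rule key[OF u])
  have Pu: "Phi u = 0" using u by simp
  have "amult c u (indic U) = 0"
    by (rule nil[OF Pu uu, where n = "Suc (card (UNIV :: 'b set))"]) (simp add: rho_le)
  then have "u = 0" using unitK_right by simp
  then show "x = 0" using key[of x] P by simp
qed

lemma main_conj:
  assumes ss: "semisimple (\<lambda>b b' b''. \<phi> (r b b' b''))"
  shows "bij Phi
    \<and> (\<forall>x y. Phi (x + y) = Phi x + Phi y)
    \<and> (\<forall>a x. Phi (\<lambda>b. a * x b) = (\<lambda>b. a * Phi x b))
    \<and> (\<forall>x y. Phi (amult (\<lambda>b b' b''. \<phi> (r b b' b'')) x y)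
             = amult (\<lambda>b b' b''. of_int (gam r b b' b'')) (Phi x) (Phi y))
    \<and> Phi (indic U) = indic D"
proof -
  have ss': "semisimple c" using ss c_lam by simp
  have inj: "inj Phi"
  proof (rule injI)
    fix x y assume "Phi x = Phi y"
    then have "Phi (x - y) = 0" by (simp add: Phi_diff)
    then have "x - y = 0" by (rule ker0[OF ss'])
    then show "x = y" by simp
  qed
  have surj: "surj Phi"
    by (rule linear_inj_surj_fun) (auto simp: Phi_add Phi_scale inj)
  have gl: "(\<lambda>b b' b''. of_int (gam r b b' b'')) = gK" by (simp add: gK_def fun_eq_iff)
  show ?thesis using inj surj Phi_add Phi_scale Phi_mult Phi_one
    unfolding c_lam gl bij_def by blast
qed

end

theorem mainTheorem7:
  fixes r :: "'b::finite \<Rightarrow> 'b \<Rightarrow> 'b \<Rightarrow> int fls"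
    and U D :: "'b set"
    and \<phi> :: "int fls \<Rightarrow> 'K::field"
  assumes r_laurent: "\<forall>b b' b''. r b b' b'' \<in> laurent"
    and assoc: "\<forall>x\<in>Aelts. \<forall>y\<in>Aelts. \<forall>z\<in>Aelts. amult r (amult r x y) z = amult r x (amult r y z)"
    and one: "compat_one r Aelts U"
    and "P1 r" and "P2 r D" and "P3 r"
    and hom: "laurent_hom \<phi>"
    and ss: "semisimple (\<lambda>b b' b''. \<phi> (r b b' b''))"
  shows "bij (PhiK \<phi> r D)
    \<and> (\<forall>x y. PhiK \<phi> r D (x + y) = PhiK \<phi> r D x + PhiK \<phi> r D y)
    \<and> (\<forall>a x. PhiK \<phi> r D (\<lambda>b. a * x b) = (\<lambda>b. a * PhiK \<phi> r D x b))
    \<and> (\<forall>x y. PhiK \<phi> r D (amult (\<lambda>b b' b''. \<phi> (r b b' b'')) x y)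
             = amult (\<lambda>b b' b''. of_int (gam r b b' b'')) (PhiK \<phi> r D x) (PhiK \<phi> r D y))
    \<and> PhiK \<phi> r D (indic U) = indic D"
proof -
  interpret thm7ctx r U D \<phi>
    using assms by unfold_locales auto
  show ?thesis by (rule main_conj[OF ss])
qed

end
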